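(* Under the standing assumptions in the context, for every $k\in[s]$ with $d(i_k)\le\delta^{1/32}C$ we have $d_H(k)\le 2\gamma\delta^{1/32}C$; moreover, with probability $1-o(M^{-2})$, $d_S(k)\le 2\gamma\delta^{1/32}C$ holds for every $k\in[s]$ with $d(i_k)\le\delta^{1/32}C$.
   Context: All asymptotics are as $n\to\infty$. For each $n$, $\mathbf d=(d(1),\dots,d(n))$ is a sequence of integers with $1\le d(1)\le\dots\le d(n)$ and even sum; $M=\sum_i d(i)$, $\Delta=d(n)$, $d(A)=\sum_{i\in A}d(i)$. $G$ is a uniformly random simple graph on $[n]$ with degree sequence $\mathbf d$. $S=\{i_1,\dots,i_s\}\subseteq[n]$ with $i_1<\dots<i_s$ is a given set, $\gamma=d(S)/M$. Standing assumptions: there is $\delta=\delta(n)\to0$ with $\delta^{-1}=O(\log\log M)$ and $\Delta^2(\gamma^{-1}\log M)^{12}\le\delta\,d(S)$, and a constant $c>0$ with $\gamma<1-c$. $C=\delta^{-1/16}\gamma^{-1}\log M$. $d_S(k)$ is the degree of $i_k$ in $G[S]$. For a sequence $\mathbf x$, $n_k(\mathbf x)$ is the number of entries equal to $k$. Definition of $\mathbf d_H$: with $Z_j\sim\mathrm{Bin}(j,\gamma)$, $N(k)=\lfloor\sum_{i\in S}\Pr(Z_{d(i)}\le k)+\tfrac12\rfloor$ for $k\ge0$, $N(-1)=0$; $\mathbf d_H=(d_H(1),d_H(2),\dots)$ is the non-decreasing sequence with $n_k(\mathbf d_H)=N(k)-N(k-1)$. *)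

theory Defs
  imports "HOL-Probability.Probability" "HOL-Library.Landau_Symbols"
begin

definition simple_graphs_on :: "nat \<Rightarrow> nat set set set" where
  "simple_graphs_on n = Pow {e. e \<subseteq> {1..n} \<and> card e = 2}"

definition gdeg :: "nat set set \<Rightarrow> nat \<Rightarrow> nat" where
  "gdeg E i = card {e\<in>E. i \<in> e}"

definition graphs_with_degrees :: "nat \<Rightarrow> (nat \<Rightarrow> nat) \<Rightarrow> nat set set set" where
  "graphs_with_degrees n d = {E \<in> simple_graphs_on n. \<forall>i\<in>{1..n}. gdeg E i = d i}"

definition induced_deg :: "nat set set \<Rightarrow> nat set \<Rightarrow> nat \<Rightarrow> nat" where
  "induced_deg E S i = card {e\<in>E. i \<in> e \<and> e \<subseteq> S}"

text \<open>k-th smallest element of S (k = 1..card S), i.e. i_k.\<close>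
definition elem_k :: "nat set \<Rightarrow> nat \<Rightarrow> nat" where
  "elem_k S k = sorted_list_of_set S ! (k - 1)"

definition Ncnt :: "real \<Rightarrow> (nat \<Rightarrow> nat) \<Rightarrow> nat set \<Rightarrow> nat \<Rightarrow> int" where
  "Ncnt \<gamma> d S k =
     \<lfloor>(\<Sum>i\<in>S. measure_pmf.prob (binomial_pmf (d i) \<gamma>) {..k}) + 1/2\<rfloor>"

definition nH :: "real \<Rightarrow> (nat \<Rightarrow> nat) \<Rightarrow> nat set \<Rightarrow> nat \<Rightarrow> nat" where
  "nH \<gamma> d S j = nat (Ncnt \<gamma> d S j - (if j = 0 then 0 else Ncnt \<gamma> d S (j - 1)))"

text \<open>The non-decreasing sequence d_H as a list: value j repeated n_j times.
  Values j > Delta do not occur (N(j) = s there), so listing j = 0..Delta suffices.\<close>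
definition dH_list :: "real \<Rightarrow> (nat \<Rightarrow> nat) \<Rightarrow> nat set \<Rightarrow> nat \<Rightarrow> nat list" where
  "dH_list \<gamma> d S \<Delta> = concat (map (\<lambda>j. replicate (nH \<gamma> d S j) j) [0..<\<Delta>+1])"

text \<open>d_H(k), 1-indexed.\<close>
definition dH :: "real \<Rightarrow> (nat \<Rightarrow> nat) \<Rightarrow> nat set \<Rightarrow> nat \<Rightarrow> nat \<Rightarrow> nat" where
  "dH \<gamma> d S \<Delta> k = dH_list \<gamma> d S \<Delta> ! (k - 1)"

end

theory Submission
  imports Defs
begin

lemma fall_bound:
  "r \<le> m \<Longrightarrow> (real m - real r + 1)^r \<le> fact r * real (m choose r)"
proof (induction r)
  case 0 then show ?case by simp
next
  case (Suc r)
  have IH: "(real m - real r + 1)^r \<le> fact r * real (m choose r)" using Suc by simp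
  have e1: "fact (Suc r) * real (m choose Suc r) = fact m / fact (m - Suc r)"
    using Suc.prems by (rule fact_binomial)
  have e2: "fact r * real (m choose r) = fact m / fact (m - r)"
    using Suc.prems by (intro fact_binomial) simp
  have fr: "fact (m - r) = (fact (m - Suc r) :: real) * real (m - r)"
    using Suc.prems by (metis Suc_diff_Suc Suc_le_lessD fact_Suc mult.commute of_nat_fact of_nat_mult)
  moreover have "0 < real (m - r)" "0 < (fact (m - Suc r) :: real)" using Suc.prems by auto
  ultimately have "fact m / fact (m - Suc r) = fact m / fact (m - r) * (real (m - r) :: real)"
    unfolding fr by simp
  hence e3: "fact (Suc r) * real (m choose Suc r) = fact r * real (m choose r) * real (m - r)"
    using e1 e2 by simp
  have "(real m - real (Suc r) + 1)^(Suc r) = (real m - real r) * (real m - real r)^r" by simp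
  also have "\<dots> \<le> (real m - real r) * (real m - real r + 1)^r"
    using Suc.prems by (intro mult_left_mono power_mono) auto
  also have "\<dots> \<le> (real m - real r) * (fact r * real (m choose r))"
    using Suc.prems IH by (intro mult_left_mono) auto
  also have "\<dots> = fact (Suc r) * real (m choose Suc r)" using e3 Suc.prems by (simp add: of_nat_diff)
  finally show ?case .
qed

lemma ratio_bound:
  fixes \<Lambda> L :: real
  assumes "0 \<le> \<Lambda>" "\<Lambda> \<le> 9/8 * L" "2*L < real m" "real r \<le> L/2" "0 < L"
  shows "\<Lambda>^r / (fact r * real (m choose r)) \<le> (3/4)^r"
proof -
  have rm: "r \<le> m" using assms by linarith
  have pos: "0 < real m - real r + 1" using assms by linarith
  have "3/2 * L \<le> real m - real r + 1" using assms by linarith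
  hence "3/4 * (3/2 * L) \<le> 3/4 * (real m - real r + 1)" by (rule mult_left_mono) simp
  hence "\<Lambda> \<le> 3/4 * (real m - real r + 1)" using assms(2) by simp
  hence "\<Lambda>^r \<le> (3/4 * (real m - real r + 1))^r" using assms by (intro power_mono) auto
  also have "\<dots> = (3/4)^r * (real m - real r + 1)^r" by (rule power_mult_distrib)
  also have "\<dots> \<le> (3/4)^r * (fact r * real (m choose r))"
    using fall_bound[OF rm] by (intro mult_left_mono) auto
  finally have "\<Lambda>^r \<le> (3/4)^r * (fact r * real (m choose r))" .
  moreover have "0 < fact r * real (m choose r)"
    using rm by (simp add: zero_less_binomial)
  ultimately show ?thesis by (simp add: divide_le_eq)
qed

lemma subsets_insert_Suc:
  assumes "x \<notin> S" "finite S"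
  shows "{A. A \<subseteq> insert x S \<and> card A = Suc k} =
         {A. A \<subseteq> S \<and> card A = Suc k} \<union> insert x ` {A. A \<subseteq> S \<and> card A = k}"
  (is "?L = ?R1 \<union> ?R2")
proof (rule set_eqI)
  fix A
  show "A \<in> ?L \<longleftrightarrow> A \<in> ?R1 \<union> ?R2"
  proof
    assume A: "A \<in> ?L"
    hence sub: "A \<subseteq> insert x S" and c: "card A = Suc k" by auto
    have fin: "finite A" using sub assms(2) finite_subset by blast
    show "A \<in> ?R1 \<union> ?R2"
    proof (cases "x \<in> A")
      case True
      have "A - {x} \<subseteq> S" using sub by blast
      moreover have "card (A - {x}) = k" using True fin c by simp
      moreover have "A = insert x (A - {x})" using True by blast
      ultimately have "A \<in> ?R2" by blast
      thus ?thesis by blast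
    next
      case False
      hence "A \<subseteq> S" using sub by blast
      thus ?thesis using c by blast
    qed
  next
    assume "A \<in> ?R1 \<union> ?R2"
    thus "A \<in> ?L"
    proof
      assume "A \<in> ?R1" thus ?thesis by blast
    next
      assume "A \<in> ?R2"
      then obtain B where B: "B \<subseteq> S" "card B = k" "A = insert x B" by blast
      have fB: "finite B" using B(1) assms(2) finite_subset by blast
      have xB: "x \<notin> B" using B(1) assms(1) by blast
      have "card A = Suc k" using B(2,3) fB xB by simp
      moreover have "A \<subseteq> insert x S" using B by blast
      ultimately show ?thesis by blast
    qed
  qed
qed

lemma esym_bound:
  fixes w :: "'a \<Rightarrow> real"
  assumes "finite S" "\<And>x. x \<in> S \<Longrightarrow> 0 \<le> w x"
  shows "(\<Sum>A\<in>{A. A \<subseteq> S \<and> card A = r}. \<Prod>a\<in>A. w a) \<le> (\<Sum>a\<in>S. w a)^r / fact r"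
  using assms
proof (induction S arbitrary: r rule: finite_induct)
  case empty
  have e: "{A. A \<subseteq> {} \<and> card A = r} = (if r = 0 then {{}} else {})" by auto
  show ?case unfolding e by simp
next
  case (insert x S)
  show ?case
  proof (cases r)
    case 0
    have "{A. A \<subseteq> insert x S \<and> card A = 0} = {{}}"
      using insert.hyps by (auto dest: finite_subset[of _ "insert x S"])
    then show ?thesis using 0 by simp
  next
    case (Suc k)
    let ?F = "\<lambda>r. {A. A \<subseteq> S \<and> card A = r}"
    let ?e = "\<lambda>r. \<Sum>A\<in>?F r. \<Prod>a\<in>A. w a"
    let ?p = "\<Sum>a\<in>S. w a"
    have finF: "finite (?F r)" for r using insert.hyps by auto
    have wx: "0 \<le> w x" using insert.prems by auto
    have wS: "\<And>y. y \<in> S \<Longrightarrow> 0 \<le> w y" using insert.prems by auto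
    have p0: "0 \<le> ?p" using wS by (simp add: sum_nonneg)
    have disj: "?F (Suc k) \<inter> insert x ` ?F k = {}" using insert.hyps by auto
    have inj: "inj_on (insert x) (?F k)"
      using insert.hyps by (intro inj_onI) (metis (no_types, lifting) insert_ident mem_Collect_eq subset_iff)
    have "(\<Sum>A\<in>{A. A \<subseteq> insert x S \<and> card A = Suc k}. \<Prod>a\<in>A. w a)
        = ?e (Suc k) + (\<Sum>A\<in>insert x ` ?F k. \<Prod>a\<in>A. w a)"
      unfolding subsets_insert_Suc[OF insert.hyps(2) insert.hyps(1)]
      by (rule sum.union_disjoint) (use finF disj in auto)
    also have "(\<Sum>A\<in>insert x ` ?F k. \<Prod>a\<in>A. w a) = (\<Sum>A\<in>?F k. \<Prod>a\<in>insert x A. w a)"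
      by (rule sum.reindex[OF inj, unfolded comp_def])
    also have "\<dots> = (\<Sum>A\<in>?F k. w x * (\<Prod>a\<in>A. w a))"
    proof (rule sum.cong)
      fix A assume "A \<in> ?F k"
      hence "finite A" "x \<notin> A" using insert.hyps finite_subset by auto
      thus "(\<Prod>a\<in>insert x A. w a) = w x * (\<Prod>a\<in>A. w a)" by simp
    qed simp
    also have "\<dots> = w x * ?e k" by (simp add: sum_distrib_left)
    finally have eq: "(\<Sum>A\<in>{A. A \<subseteq> insert x S \<and> card A = Suc k}. \<Prod>a\<in>A. w a) = ?e (Suc k) + w x * ?e k" .
    have b1: "?e (Suc k) \<le> ?p^(Suc k) / fact (Suc k)" using insert.IH wS by blast
    have b2: "?e k \<le> ?p^k / fact k" using insert.IH wS by blast
    have bern: "?p^(Suc k) + real (Suc k) * w x * ?p^k \<le> (?p + w x)^(Suc k)"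
    proof -
      have "(?p + w x)^(Suc k) = (\<Sum>i\<le>Suc k. real (Suc k choose i) * w x ^ i * ?p ^ (Suc k - i))"
        by (subst add.commute) (rule binomial_ring)
      also have "\<dots> \<ge> (\<Sum>i\<in>{0,1}. real (Suc k choose i) * w x ^ i * ?p ^ (Suc k - i))"
        by (rule sum_mono2) (use wx p0 in auto)
      finally show ?thesis by (simp add: algebra_simps)
    qed
    have "?e (Suc k) + w x * ?e k \<le> ?p^(Suc k) / fact (Suc k) + w x * (?p^k / fact k)"
      using b1 b2 wx by (intro add_mono mult_left_mono) auto
    also have "\<dots> = (?p^(Suc k) + real (Suc k) * w x * ?p^k) / fact (Suc k)"
    proof -
      have fk: "(fact (Suc k) :: real) = real (Suc k) * fact k" by (simp add: fact_Suc)
      have "w x * (?p^k / fact k) = real (Suc k) * w x * ?p^k / fact (Suc k)"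
        unfolding fk by simp
      thus ?thesis by (simp add: add_divide_distrib)
    qed
    also have "\<dots> \<le> (?p + w x)^(Suc k) / fact (Suc k)"
      using bern by (intro divide_right_mono) auto
    finally show ?thesis using eq Suc insert.hyps by (simp add: add.commute)
  qed
qed

lemma fact_moment_binomial:
  fixes p :: real
  assumes "0 \<le> p" "p \<le> 1"
  shows "(\<Sum>j\<le>d. real (j choose r) * (real (d choose j) * p^j * (1-p)^(d-j))) = real (d choose r) * p^r"
proof (cases "r \<le> d")
  case False
  have "\<And>j. j \<in> {..d} \<Longrightarrow> real (j choose r) * (real (d choose j) * p^j * (1-p)^(d-j)) = 0" using False by simp
  hence "(\<Sum>j\<le>d. real (j choose r) * (real (d choose j) * p^j * (1-p)^(d-j))) = 0" by (rule sum.neutral[OF ballI])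
  thus ?thesis using False by simp
next
  case True
  let ?f = "\<lambda>j. real (j choose r) * (real (d choose j) * p^j * (1-p)^(d-j))"
  have "(\<Sum>j\<le>d. ?f j) = (\<Sum>j\<in>{r..d}. ?f j)"
    by (rule sum.mono_neutral_right) auto
  also have "\<dots> = (\<Sum>j\<in>{0+r..(d-r)+r}. ?f j)" using True by simp
  also have "\<dots> = (\<Sum>i\<in>{0..d-r}. ?f (i+r))" by (rule sum.shift_bounds_cl_nat_ivl)
  also have "\<dots> = (\<Sum>i\<le>d-r. ?f (i+r))" by (simp add: atLeast0AtMost)
  also have "\<dots> = (\<Sum>i\<le>d-r. real (d choose r) * p^r * (real ((d-r) choose i) * p^i * (1-p)^((d-r)-i)))"
  proof (rule sum.cong[OF refl])
    fix i assume i: "i \<in> {..d-r}"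
    have cm: "(d choose (i+r)) * ((i+r) choose r) = (d choose r) * ((d - r) choose i)"
      using choose_mult[of r "i+r" d] i True by simp
    have "?f (i+r) = real ((d choose (i+r)) * ((i+r) choose r)) * (p^r * p^i) * (1-p)^(d-r-i)"
      using i True by (simp add: power_add algebra_simps)
    also have "\<dots> = real (d choose r) * p^r * (real ((d-r) choose i) * p^i * (1-p)^((d-r)-i))"
      unfolding cm by (simp add: algebra_simps)
    finally show "?f (i+r) = real (d choose r) * p^r * (real ((d-r) choose i) * p^i * (1-p)^((d-r)-i))" .
  qed
  also have "\<dots> = real (d choose r) * p^r * (\<Sum>i\<le>d-r. real ((d-r) choose i) * p^i * (1-p)^((d-r)-i))"
    by (simp add: sum_distrib_left)
  also have "(\<Sum>i\<le>d-r. real ((d-r) choose i) * p^i * (1-p)^((d-r)-i)) = (p + (1-p))^(d-r)"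
    by (rule binomial_ring[symmetric])
  finally show ?thesis by simp
qed

lemma binomial_tail:
  fixes p :: real
  assumes p: "0 \<le> p" "p \<le> 1" and r: "r \<le> Suc x"
  shows "1 - measure_pmf.prob (binomial_pmf d p) {..x} \<le> real (d choose r) * p^r / real (Suc x choose r)"
proof -
  let ?q = "\<lambda>j. real (d choose j) * p^j * (1-p)^(d-j)"
  have pmf: "pmf (binomial_pmf d p) j = ?q j" for j using p by simp
  have q0: "0 \<le> ?q j" for j using p by simp
  have P: "measure_pmf.prob (binomial_pmf d p) {..x} = (\<Sum>j\<le>x. ?q j)"
    by (subst measure_measure_pmf_finite) (auto simp: pmf)
  have one: "(\<Sum>j\<le>d. ?q j) = 1"
    using binomial_ring[of p "1-p" d] by (simp add: atLeast0AtMost)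
  have "(\<Sum>j\<le>d. ?q j) = (\<Sum>j\<in>{..d} \<inter> {..x}. ?q j) + (\<Sum>j\<in>{..d} - {..x}. ?q j)"
    by (metis (no_types, lifting) Diff_Int sum.Int_Diff finite_atMost inf_commute Int_Diff)
  moreover have "(\<Sum>j\<in>{..d} \<inter> {..x}. ?q j) \<le> (\<Sum>j\<le>x. ?q j)"
    by (rule sum_mono2) (auto intro: q0)
  ultimately have "1 - (\<Sum>j\<le>x. ?q j) \<le> (\<Sum>j\<in>{..d} - {..x}. ?q j)" using one by linarith
  also have "\<dots> \<le> (\<Sum>j\<in>{..d} - {..x}. real (j choose r) / real (Suc x choose r) * ?q j)"
  proof (rule sum_mono)
    fix j assume j: "j \<in> {..d} - {..x}"
    hence "Suc x \<le> j" by auto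
    hence "Suc x choose r \<le> j choose r" by (rule binomial_right_mono)
    moreover have "0 < Suc x choose r" using r by (simp add: zero_less_binomial)
    ultimately have "1 \<le> real (j choose r) / real (Suc x choose r)" by simp
    thus "?q j \<le> real (j choose r) / real (Suc x choose r) * ?q j"
      using q0[of j] by (metis mult_left_mono mult_1 mult.commute)
  qed
  also have "\<dots> \<le> (\<Sum>j\<le>d. real (j choose r) / real (Suc x choose r) * ?q j)"
    by (rule sum_mono2) (use q0 in auto)
  also have "\<dots> = (\<Sum>j\<le>d. real (j choose r) * ?q j) / real (Suc x choose r)"
    by (simp add: sum_divide_distrib)
  also have "\<dots> = real (d choose r) * p^r / real (Suc x choose r)"
    using fact_moment_binomial[OF p, where d=d and r=r] by simp
  finally show ?thesis using P by simp
qed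

definition nbr :: "nat set set \<Rightarrow> nat \<Rightarrow> nat set" where
  "nbr E x = {y. {x,y} \<in> E}"

lemma two_set_obtain:
  assumes "card e = 2" "x \<in> e"
  obtains y where "e = {x,y}" "y \<noteq> x"
proof -
  from assms(1) obtain u w where e: "e = {u,w}" "u \<noteq> w" by (meson card_2_iff)
  show ?thesis
  proof (cases "x = u")
    case True then show ?thesis using e that by blast
  next
    case False then have "x = w" using assms(2) e by auto
    then show ?thesis using e that by (metis insert_commute)
  qed
qed

lemma simple_graphs_onD:
  assumes "E \<in> simple_graphs_on n" "e \<in> E"
  shows "e \<subseteq> {1..n}" "card e = 2"
  using assms by (auto simp: simple_graphs_on_def)

lemma finite_edge_universe: "finite {e. e \<subseteq> {1..n::nat} \<and> card e = 2}"
proof -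
  have "{e. e \<subseteq> {1..n::nat} \<and> card e = 2} \<subseteq> Pow {1..n}" by blast
  thus ?thesis by (rule finite_subset) simp
qed

lemma finite_simple_graphs_on: "finite (simple_graphs_on n)"
  unfolding simple_graphs_on_def using finite_edge_universe by simp

lemma simple_graph_finite: "E \<in> simple_graphs_on n \<Longrightarrow> finite E"
  unfolding simple_graphs_on_def using finite_edge_universe finite_subset by blast

lemma nbr_sub:
  assumes "E \<in> simple_graphs_on n"
  shows "nbr E x \<subseteq> {1..n}"
proof
  fix y assume "y \<in> nbr E x"
  hence "{x,y} \<in> E" by (simp add: nbr_def)
  thus "y \<in> {1..n}" using simple_graphs_onD[OF assms] by blast
qed

lemma nbr_not_self:
  assumes "E \<in> simple_graphs_on n" "y \<in> nbr E x"
  shows "y \<noteq> x"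
proof
  assume "y = x"
  hence "{x,y} \<in> E" "card {x,y} = 1" using assms(2) by (auto simp: nbr_def)
  thus False using simple_graphs_onD[OF assms(1)] by auto
qed

lemma nbr_empty:
  assumes "E \<in> simple_graphs_on n" "x \<notin> {1..n}"
  shows "nbr E x = {}"
proof -
  { fix y assume "{x,y} \<in> E"
    hence False using simple_graphs_onD(1)[OF assms(1)] assms(2) by blast }
  thus ?thesis by (auto simp: nbr_def)
qed

lemma card_nbr:
  assumes "E \<in> simple_graphs_on n"
  shows "card (nbr E x) = gdeg E x"
proof -
  have "bij_betw (\<lambda>y. {x,y}) (nbr E x) {e\<in>E. x \<in> e}"
  proof (rule bij_betwI')
    fix y z assume "y \<in> nbr E x" "z \<in> nbr E x"
    show "({x,y} = {x,z}) = (y = z)" by (auto simp: doubleton_eq_iff)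
  next
    fix y assume "y \<in> nbr E x" thus "{x,y} \<in> {e\<in>E. x \<in> e}" by (simp add: nbr_def)
  next
    fix e assume e: "e \<in> {e\<in>E. x \<in> e}"
    hence "card e = 2" using simple_graphs_onD[OF assms] by blast
    moreover have "x \<in> e" using e by simp
    ultimately obtain y where y: "e = {x,y}" by (rule two_set_obtain)
    have "y \<in> nbr E x" using e y by (simp add: nbr_def)
    thus "\<exists>y\<in>nbr E x. e = {x,y}" using y by blast
  qed
  thus ?thesis unfolding gdeg_def by (rule bij_betw_same_card)
qed

lemma gdeg_le_card_nbr_finite:
  assumes "E \<in> simple_graphs_on n"
  shows "finite (nbr E x)"
  using nbr_sub[OF assms] finite_subset by blast

lemma nbr_sym: "y \<in> nbr E x \<longleftrightarrow> x \<in> nbr E y"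
  by (simp add: nbr_def insert_commute)

lemma gdeg_switch:
  assumes dist: "v \<noteq> a" "v \<noteq> x" "v \<noteq> y" "a \<noteq> x" "a \<noteq> y" "x \<noteq> y"
    and "{v,a} \<in> E" "{x,y} \<in> E" "{v,x} \<notin> E" "{a,y} \<notin> E" "finite E"
  shows "gdeg ((E - {{v,a},{x,y}}) \<union> {{v,x},{a,y}}) i = gdeg E i"
proof -
  let ?Ei = "{e\<in>E. i \<in> e}"
  let ?R = "{e\<in>{{v,a},{x,y}}. i \<in> e}"
  let ?Ad = "{e\<in>{{v,x},{a,y}}. i \<in> e}"
  have eq: "{e\<in>(E - {{v,a},{x,y}}) \<union> {{v,x},{a,y}}. i \<in> e} = (?Ei - ?R) \<union> ?Ad" by blast
  have fin: "finite ?Ei" using assms by simp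
  have disj: "(?Ei - ?R) \<inter> ?Ad = {}" using assms by blast
  have sub: "?R \<subseteq> ?Ei" using assms by blast
  have "card ((?Ei - ?R) \<union> ?Ad) = card (?Ei - ?R) + card ?Ad"
    by (rule card_Un_disjoint) (use fin disj in auto)
  also have "card (?Ei - ?R) = card ?Ei - card ?R"
    using sub fin by (simp add: card_Diff_subset finite_subset)
  also have "card ?R = card ?Ad"
  proof -
    have d1: "{v,a} \<noteq> {x,y}" using dist by (metis doubleton_eq_iff)
    have d2: "{v,x} \<noteq> {a,y}" using dist by (metis doubleton_eq_iff)
    have "i = v \<or> i = a \<or> i = x \<or> i = y \<or> i \<notin> {v,a,x,y}" by blast
    thus ?thesis
    proof (elim disjE)
      assume i: "i = v"
      have "?R = {{v,a}}" "?Ad = {{v,x}}" using i dist by auto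
      thus ?thesis by simp
    next
      assume i: "i = a"
      have "?R = {{v,a}}" "?Ad = {{a,y}}" using i dist by auto
      thus ?thesis by simp
    next
      assume i: "i = x"
      have "?R = {{x,y}}" "?Ad = {{v,x}}" using i dist by auto
      thus ?thesis by simp
    next
      assume i: "i = y"
      have "?R = {{x,y}}" "?Ad = {{a,y}}" using i dist by auto
      thus ?thesis by simp
    next
      assume i: "i \<notin> {v,a,x,y}"
      have "?R = {}" "?Ad = {}" using i by auto
      thus ?thesis by (simp only:)
    qed
  qed
  also have "card ?Ei - card ?Ad + card ?Ad = card ?Ei"
  proof -
    have "card ?R \<le> card ?Ei" by (rule card_mono[OF fin sub])
    thus ?thesis using \<open>card ?R = card ?Ad\<close> by simp
  qed
  finally show ?thesis unfolding gdeg_def eq .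
qed

definition Yset :: "nat \<Rightarrow> (nat \<Rightarrow> nat) \<Rightarrow> nat \<Rightarrow> nat set \<Rightarrow> nat set set set" where
  "Yset n d v A = {E \<in> graphs_with_degrees n d. \<forall>a\<in>A. {v,a} \<in> E}"

definition sw :: "nat \<Rightarrow> nat \<Rightarrow> nat \<Rightarrow> nat \<Rightarrow> nat set set \<Rightarrow> nat set set" where
  "sw v a x y E = (E - {{v,a},{x,y}}) \<union> {{v,x},{a,y}}"

definition good :: "nat \<Rightarrow> nat \<Rightarrow> nat set set \<Rightarrow> (nat \<times> nat) set" where
  "good v a E = {(x,y). {x,y} \<in> E \<and> x \<notin> {v,a} \<and> y \<notin> {v,a} \<and> {v,x} \<notin> E \<and> {a,y} \<notin> E}"

lemma card_Sigma_le:
  assumes "finite X" "\<And>x. x \<in> X \<Longrightarrow> finite (B x)" "\<And>x. x \<in> X \<Longrightarrow> card (B x) \<le> K"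
  shows "card (Sigma X B) \<le> card X * K"
proof -
  have "card (Sigma X B) = (\<Sum>x\<in>X. card (B x))" by (rule card_SigmaI) (use assms in auto)
  also have "\<dots> \<le> (\<Sum>x\<in>X. K)" by (rule sum_mono) (use assms in auto)
  finally show ?thesis by simp
qed

lemma card_Un4: "card (A \<union> B \<union> C \<union> D) \<le> card A + card B + card C + card D"
proof -
  have h1: "card (A \<union> B \<union> C \<union> D) \<le> card (A \<union> B \<union> C) + card D" by (rule card_Un_le)
  have h2: "card (A \<union> B \<union> C) \<le> card (A \<union> B) + card C" by (rule card_Un_le)
  have h3: "card (A \<union> B) \<le> card A + card B" by (rule card_Un_le)
  have h4: "card (A \<union> B \<union> C) \<le> card A + card B + card C"
    by (rule order_trans[OF h2 add_right_mono[OF h3]])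
  show ?thesis by (rule order_trans[OF h1 add_right_mono[OF h4]])
qed

lemma card_image_swap: "card ((\<lambda>(x,y). (y,x)) ` A) = card A"
  by (rule card_image) (auto simp: inj_on_def)

lemma good_card:
  assumes E: "E \<in> graphs_with_degrees n d" and Dm: "\<And>i. i \<in> {1..n} \<Longrightarrow> d i \<le> Dm"
    and v: "v \<in> {1..n}" and a: "a \<in> {1..n}"
  shows "real (\<Sum>i\<in>{1..n}. d i) - 6 * real Dm ^ 2 \<le> real (card (good v a E))"
proof -
  have Es: "E \<in> simple_graphs_on n" and deg: "\<And>i. i \<in> {1..n} \<Longrightarrow> gdeg E i = d i"
    using E by (auto simp: graphs_with_degrees_def)
  have finN: "finite (nbr E x)" for x using gdeg_le_card_nbr_finite[OF Es] .
  have cardN: "card (nbr E x) \<le> Dm" for x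
  proof (cases "x \<in> {1..n}")
    case True thus ?thesis using card_nbr[OF Es] deg Dm by simp
  next
    case False thus ?thesis using nbr_empty[OF Es False] by simp
  qed
  define Ob where "Ob = Sigma {1..n} (nbr E)"
  have cardO: "card Ob = (\<Sum>i\<in>{1..n}. d i)"
    unfolding Ob_def by (subst card_SigmaI) (auto simp: finN card_nbr[OF Es] deg)
  have finOb: "finite Ob" unfolding Ob_def using finN by auto
  define B1 where "B1 = Sigma {v,a} (nbr E)"
  define B3 where "B3 = Sigma (nbr E v) (nbr E)"
  define B4 where "B4 = Sigma (nbr E a) (nbr E)"
  define sw2 where "sw2 = (\<lambda>(x::nat,y::nat). (y,x))"
  have c1: "card B1 \<le> 2 * Dm"
  proof -
    have "card B1 \<le> card {v,a} * Dm" unfolding B1_def by (rule card_Sigma_le) (auto simp: finN cardN)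
    also have "\<dots> \<le> 2 * Dm" by (rule mult_right_mono) (auto simp: card_insert_if)
    finally show ?thesis .
  qed
  have c3: "card B3 \<le> Dm * Dm"
  proof -
    have "card B3 \<le> card (nbr E v) * Dm" unfolding B3_def by (rule card_Sigma_le) (auto simp: finN cardN)
    also have "\<dots> \<le> Dm * Dm" using cardN[of v] by (rule mult_right_mono) simp
    finally show ?thesis .
  qed
  have c4: "card B4 \<le> Dm * Dm"
  proof -
    have "card B4 \<le> card (nbr E a) * Dm" unfolding B4_def by (rule card_Sigma_le) (auto simp: finN cardN)
    also have "\<dots> \<le> Dm * Dm" using cardN[of a] by (rule mult_right_mono) simp
    finally show ?thesis .
  qed
  have fB: "finite B1" "finite B3" "finite B4" unfolding B1_def B3_def B4_def using finN by auto
  have sub: "Ob - good v a E \<subseteq> B1 \<union> sw2 ` B1 \<union> B3 \<union> sw2 ` B4"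
  proof
    fix p assume p: "p \<in> Ob - good v a E"
    obtain x y where xy: "p = (x,y)" by (cases p)
    have e: "{x,y} \<in> E" using p xy by (simp add: Ob_def nbr_def)
    have ns: "\<not> (x \<notin> {v,a} \<and> y \<notin> {v,a} \<and> {v,x} \<notin> E \<and> {a,y} \<notin> E)"
      using p xy e by (simp add: good_def)
    have yx: "{y,x} \<in> E" using e by (simp add: insert_commute)
    show "p \<in> B1 \<union> sw2 ` B1 \<union> B3 \<union> sw2 ` B4"
    proof (cases "x \<in> {v,a}")
      case True thus ?thesis using e xy by (auto simp: B1_def nbr_def)
    next
      case F1: False
      show ?thesis
      proof (cases "y \<in> {v,a}")
        case True
        hence "(y,x) \<in> B1" using yx by (auto simp: B1_def nbr_def)
        hence "sw2 (y,x) \<in> sw2 ` B1" by blast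
        thus ?thesis using xy by (simp add: sw2_def)
      next
        case F2: False
        show ?thesis
        proof (cases "{v,x} \<in> E")
          case True
          hence "(x,y) \<in> B3" using e by (simp add: B3_def nbr_def)
          thus ?thesis using xy by blast
        next
          case False
          hence "{a,y} \<in> E" using ns F1 F2 by blast
          hence "(y,x) \<in> B4" using yx by (simp add: B4_def nbr_def)
          hence "sw2 (y,x) \<in> sw2 ` B4" by blast
          thus ?thesis using xy by (simp add: sw2_def)
        qed
      qed
    qed
  qed
  have "card (Ob - good v a E) \<le> card (B1 \<union> sw2 ` B1 \<union> B3 \<union> sw2 ` B4)"
    by (rule card_mono) (use fB sub in auto)
  also have "\<dots> \<le> card B1 + card (sw2 ` B1) + card B3 + card (sw2 ` B4)"
    by (rule card_Un4)
  also have "\<dots> \<le> 2 * Dm + 2 * Dm + Dm * Dm + Dm * Dm"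
    using c1 c3 c4 card_image_swap[of B1] card_image_swap[of B4] unfolding sw2_def by simp
  also have "\<dots> \<le> 6 * Dm ^ 2" by (simp add: power2_eq_square)
  finally have bad: "card (Ob - good v a E) \<le> 6 * Dm ^ 2" .
  have gsub: "good v a E \<subseteq> Ob"
  proof
    fix p assume p: "p \<in> good v a E"
    obtain x y where xy: "p = (x,y)" by (cases p)
    have e: "{x,y} \<in> E" using p xy by (simp add: good_def)
    hence "x \<in> {1..n}" using simple_graphs_onD(1)[OF Es e] by blast
    thus "p \<in> Ob" using e xy by (simp add: Ob_def nbr_def)
  qed
  have "card (Ob - good v a E) = card Ob - card (good v a E)"
    by (rule card_Diff_subset[OF finite_subset[OF gsub finOb] gsub])
  moreover have "card (good v a E) \<le> card Ob" by (rule card_mono[OF finOb gsub])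
  ultimately have "card Ob \<le> card (Ob - good v a E) + card (good v a E)" by simp
  hence "card Ob \<le> 6 * Dm ^ 2 + card (good v a E)" by (rule order_trans[OF _ add_right_mono[OF bad]])
  hence "real (card Ob) \<le> real (6 * Dm ^ 2 + card (good v a E))" by (simp only: of_nat_le_iff)
  hence "real (card Ob) \<le> 6 * real Dm ^ 2 + real (card (good v a E))" by simp
  thus ?thesis using cardO by simp
qed

lemma sw_inv:
  assumes "{v,a} \<in> E" "{x,y} \<in> E" "{v,x} \<notin> E" "{a,y} \<notin> E"
  shows "E = (sw v a x y E - {{v,x},{a,y}}) \<union> {{v,a},{x,y}}"
  using assms unfolding sw_def by blast

lemma finite_Yset: "finite (Yset n d v A)"
proof -
  have "Yset n d v A \<subseteq> simple_graphs_on n" by (auto simp: Yset_def graphs_with_degrees_def)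
  thus ?thesis using finite_simple_graphs_on finite_subset by blast
qed

lemma good_sub: "E \<in> simple_graphs_on n \<Longrightarrow> good v a E \<subseteq> {1..n} \<times> {1..n}"
proof
  fix p assume E: "E \<in> simple_graphs_on n" and p: "p \<in> good v a E"
  obtain x y where xy: "p = (x,y)" by (cases p)
  have e: "{x,y} \<in> E" using p xy by (simp add: good_def)
  thus "p \<in> {1..n} \<times> {1..n}" using simple_graphs_onD(1)[OF E e] xy by blast
qed

lemma switch_count:
  assumes Dm: "\<And>i. i \<in> {1..n} \<Longrightarrow> d i \<le> Dm" and v: "v \<in> {1..n}"
    and a: "a \<in> {1..n}" "a \<noteq> v" "a \<notin> A"
  shows "real (card (Yset n d v (insert a A))) * (real (\<Sum>i\<in>{1..n}. d i) - 6 * real Dm ^ 2)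
         \<le> real (card (Yset n d v A)) * real (d v) * real (d a)"
proof -
  let ?K = "real (\<Sum>i\<in>{1..n}. d i) - 6 * real Dm ^ 2"
  let ?Y' = "Yset n d v (insert a A)"
  let ?Y = "Yset n d v A"
  define P where "P = Sigma ?Y' (good v a)"
  define Q where "Q = Sigma ?Y (\<lambda>E. nbr E v \<times> nbr E a)"
  define f where "f = (\<lambda>(E, (x::nat, y::nat)). (sw v a x y E, (x, y)))"
  have Y'G: "E \<in> graphs_with_degrees n d" if "E \<in> ?Y'" for E using that by (simp add: Yset_def)
  have YG: "E \<in> graphs_with_degrees n d" if "E \<in> ?Y" for E using that by (simp add: Yset_def)
  have GS: "E \<in> simple_graphs_on n" if "E \<in> graphs_with_degrees n d" for E using that by (simp add: graphs_with_degrees_def)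
  have Gdeg: "gdeg E i = d i" if "E \<in> graphs_with_degrees n d" "i \<in> {1..n}" for E i
    using that by (simp add: graphs_with_degrees_def)
  have finGood: "finite (good v a E)" if "E \<in> simple_graphs_on n" for E
    using good_sub[OF that] finite_subset by blast
  have cP: "card P = (\<Sum>E\<in>?Y'. card (good v a E))"
    unfolding P_def by (rule card_SigmaI) (use finite_Yset finGood Y'G GS in auto)
  have "real (card ?Y') * ?K = (\<Sum>E\<in>?Y'. ?K)" by simp
  also have "\<dots> \<le> (\<Sum>E\<in>?Y'. real (card (good v a E)))"
    by (rule sum_mono) (rule good_card[OF Y'G Dm v a(1)], auto)
  also have "\<dots> = real (card P)" using cP by simp
  finally have lowP: "real (card ?Y') * ?K \<le> real (card P)" .
  have cQ: "card Q = (\<Sum>E\<in>?Y. card (nbr E v \<times> nbr E a))"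
    unfolding Q_def by (rule card_SigmaI) (use finite_Yset gdeg_le_card_nbr_finite YG GS in blast)+
  also have "\<dots> = (\<Sum>E\<in>?Y. d v * d a)"
  proof (rule sum.cong[OF refl])
    fix E assume "E \<in> ?Y"
    hence G: "E \<in> graphs_with_degrees n d" by (rule YG)
    show "card (nbr E v \<times> nbr E a) = d v * d a"
      using card_nbr[OF GS[OF G]] Gdeg[OF G] v a(1) by (simp add: card_cartesian_product)
  qed
  finally have cQ': "card Q = card ?Y * (d v * d a)" by simp
  have finQ: "finite Q" unfolding Q_def using finite_Yset gdeg_le_card_nbr_finite YG GS by blast
  have key: "f p \<in> Q" if p: "p \<in> P" for p
  proof -
    obtain E x y where pe: "p = (E,(x,y))" by (cases p) auto
    have EY: "E \<in> ?Y'" and g: "(x,y) \<in> good v a E" using p pe by (auto simp: P_def)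
    have G: "E \<in> graphs_with_degrees n d" using Y'G[OF EY] .
    have ES: "E \<in> simple_graphs_on n" using GS[OF G] .
    have va: "{v,a} \<in> E" and vA: "\<forall>a'\<in>A. {v,a'} \<in> E" using EY by (auto simp: Yset_def)
    have xy: "{x,y} \<in> E" and xva: "x \<notin> {v,a}" and yva: "y \<notin> {v,a}" and vx: "{v,x} \<notin> E" and ay: "{a,y} \<notin> E"
      using g by (auto simp: good_def)
    have xyne: "x \<noteq> y" using simple_graphs_onD(2)[OF ES xy] by auto
    have xyn: "x \<in> {1..n}" "y \<in> {1..n}" using simple_graphs_onD(1)[OF ES xy] by auto
    have finE: "finite E" using simple_graph_finite[OF ES] .
    let ?E' = "sw v a x y E"
    have S': "?E' \<in> simple_graphs_on n"
    proof -
      have "E \<subseteq> {e. e \<subseteq> {1..n} \<and> card e = 2}" using ES by (simp add: simple_graphs_on_def)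
      moreover have "{v,x} \<subseteq> {1..n}" "card {v,x} = 2" using v xyn xva by auto
      moreover have "{a,y} \<subseteq> {1..n}" "card {a,y} = 2" using a xyn yva by auto
      ultimately have "?E' \<subseteq> {e. e \<subseteq> {1..n} \<and> card e = 2}" unfolding sw_def by blast
      thus ?thesis by (simp add: simple_graphs_on_def)
    qed
    have D': "gdeg ?E' i = d i" if "i \<in> {1..n}" for i
    proof -
      have "gdeg ?E' i = gdeg E i" unfolding sw_def
        by (rule gdeg_switch) (use a(2) xva yva xyne va xy vx ay finE in auto)
      thus ?thesis using Gdeg[OF G that] by simp
    qed
    have G': "?E' \<in> graphs_with_degrees n d" using S' D' by (simp add: graphs_with_degrees_def)
    have A': "\<forall>a'\<in>A. {v,a'} \<in> ?E'"
    proof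
      fix a' assume a': "a' \<in> A"
      have "{v,a'} \<in> E" using vA a' by blast
      moreover have "{v,a'} \<noteq> {v,a}" using a' a(3) by (auto simp: doubleton_eq_iff)
      moreover have "{v,a'} \<noteq> {x,y}" using xva yva by (auto simp: doubleton_eq_iff)
      ultimately show "{v,a'} \<in> ?E'" unfolding sw_def by blast
    qed
    have "x \<in> nbr ?E' v" "y \<in> nbr ?E' a" unfolding nbr_def sw_def by auto
    thus ?thesis using G' A' pe unfolding f_def Q_def Yset_def by auto
  qed
  have inj: "inj_on f P"
  proof (rule inj_onI)
    fix p q assume p: "p \<in> P" and q: "q \<in> P" and fpq: "f p = f q"
    obtain E x y where pe: "p = (E,(x,y))" by (cases p) auto
    obtain E2 x2 y2 where qe: "q = (E2,(x2,y2))" by (cases q) auto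
    have same: "x2 = x" "y2 = y" "sw v a x y E = sw v a x y E2" using fpq pe qe by (auto simp: f_def)
    have c1: "{v,a} \<in> E" "{x,y} \<in> E" "{v,x} \<notin> E" "{a,y} \<notin> E"
      using p pe by (auto simp: P_def Yset_def good_def)
    have c2: "{v,a} \<in> E2" "{x,y} \<in> E2" "{v,x} \<notin> E2" "{a,y} \<notin> E2"
      using q qe same by (auto simp: P_def Yset_def good_def)
    have "E = E2" using sw_inv[OF c1] sw_inv[OF c2] same(3) by simp
    thus "p = q" using pe qe same by simp
  qed
  have "card P \<le> card Q" by (rule card_inj_on_le[OF inj _ finQ]) (use key in blast)
  hence "real (card P) \<le> real (card ?Y * (d v * d a))" using cQ' by (simp only: of_nat_le_iff)
  hence "real (card P) \<le> real (card ?Y) * real (d v) * real (d a)" by (simp add: mult.assoc)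
  thus ?thesis using lowP by linarith
qed

lemma Y_bound:
  assumes "finite A" "A \<subseteq> {1..n} - {v}" and Dm: "\<And>i. i \<in> {1..n} \<Longrightarrow> d i \<le> Dm" and v: "v \<in> {1..n}"
    and K: "0 < real (\<Sum>i\<in>{1..n}. d i) - 6 * real Dm ^ 2"
  shows "real (card (Yset n d v A)) \<le> real (card (graphs_with_degrees n d)) *
           (\<Prod>a\<in>A. real (d v) * real (d a) / (real (\<Sum>i\<in>{1..n}. d i) - 6 * real Dm ^ 2))"
  using assms(1,2)
proof (induction A rule: finite_induct)
  case empty
  have "Yset n d v {} = graphs_with_degrees n d" by (simp add: Yset_def)
  thus ?case by simp
next
  case (insert a A)
  let ?K = "real (\<Sum>i\<in>{1..n}. d i) - 6 * real Dm ^ 2"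
  have a: "a \<in> {1..n}" "a \<noteq> v" using insert.prems by auto
  have IH: "real (card (Yset n d v A)) \<le> real (card (graphs_with_degrees n d)) * (\<Prod>a\<in>A. real (d v) * real (d a) / ?K)"
    using insert.IH insert.prems by blast
  have sc: "real (card (Yset n d v (insert a A))) * ?K \<le> real (card (Yset n d v A)) * real (d v) * real (d a)"
    by (rule switch_count[OF Dm v a insert.hyps(2)])
  hence "real (card (Yset n d v (insert a A))) \<le> real (card (Yset n d v A)) * (real (d v) * real (d a) / ?K)"
    using K by (simp add: field_simps)
  also have "\<dots> \<le> real (card (graphs_with_degrees n d)) * (\<Prod>a\<in>A. real (d v) * real (d a) / ?K) * (real (d v) * real (d a) / ?K)"
    by (rule mult_right_mono[OF IH]) (use K in simp)
  also have "\<dots> = real (card (graphs_with_degrees n d)) * (\<Prod>a\<in>insert a A. real (d v) * real (d a) / ?K)"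
    using insert.hyps by (simp add: mult_ac)
  finally show ?case .
qed

lemma sum_Yset:
  assumes "finite T"
  shows "(\<Sum>A\<in>{A. A \<subseteq> T \<and> card A = r}. card (Yset n d v A))
       = (\<Sum>E\<in>graphs_with_degrees n d. card (nbr E v \<inter> T) choose r)"
proof -
  let ?F = "{A. A \<subseteq> T \<and> card A = r}"
  let ?G = "graphs_with_degrees n d"
  have finF: "finite ?F" using assms by simp
  have finG: "finite ?G" using finite_Yset[of n d v "{}"] by (simp add: Yset_def)
  have cY: "card (Yset n d v A) = (\<Sum>E\<in>?G. if A \<subseteq> nbr E v then 1 else 0)" for A
  proof -
    have "Yset n d v A = {E\<in>?G. A \<subseteq> nbr E v}" by (auto simp: Yset_def nbr_def)
    hence "card (Yset n d v A) = (\<Sum>E\<in>{E\<in>?G. A \<subseteq> nbr E v}. 1)" by simp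
    also have "\<dots> = (\<Sum>E\<in>?G. if A \<subseteq> nbr E v then 1 else 0)" by (rule sum.inter_filter[OF finG])
    finally show ?thesis .
  qed
  have "(\<Sum>A\<in>?F. card (Yset n d v A)) = (\<Sum>A\<in>?F. \<Sum>E\<in>?G. if A \<subseteq> nbr E v then 1 else 0)"
    using cY by simp
  also have "\<dots> = (\<Sum>E\<in>?G. \<Sum>A\<in>?F. if A \<subseteq> nbr E v then 1 else 0)" by (rule sum.swap)
  also have "\<dots> = (\<Sum>E\<in>?G. card (nbr E v \<inter> T) choose r)"
  proof (rule sum.cong[OF refl])
    fix E assume "E \<in> ?G"
    have "(\<Sum>A\<in>?F. if A \<subseteq> nbr E v then 1 else 0) = (\<Sum>A\<in>{A\<in>?F. A \<subseteq> nbr E v}. 1::nat)"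
      by (rule sum.inter_filter[OF finF, symmetric])
    also have "{A\<in>?F. A \<subseteq> nbr E v} = {A. A \<subseteq> nbr E v \<inter> T \<and> card A = r}" by auto
    also have "(\<Sum>A\<in>{A. A \<subseteq> nbr E v \<inter> T \<and> card A = r}. 1::nat) = card (nbr E v \<inter> T) choose r"
      using n_subsets[of "nbr E v \<inter> T" r] assms by simp
    finally show "(\<Sum>A\<in>?F. if A \<subseteq> nbr E v then 1 else 0) = card (nbr E v \<inter> T) choose r" .
  qed
  finally show ?thesis .
qed

lemma graph_tail:
  assumes T: "T \<subseteq> {1..n} - {v}" and Dm: "\<And>i. i \<in> {1..n} \<Longrightarrow> d i \<le> Dm" and v: "v \<in> {1..n}"
    and K: "0 < real (\<Sum>i\<in>{1..n}. d i) - 6 * real Dm ^ 2"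
    and r: "r \<le> m"
  shows "real (card {E \<in> graphs_with_degrees n d. m \<le> card (nbr E v \<inter> T)})
       \<le> real (card (graphs_with_degrees n d)) *
          ((real (d v) * real (\<Sum>a\<in>T. d a) / (real (\<Sum>i\<in>{1..n}. d i) - 6 * real Dm ^ 2))^r
            / (fact r * real (m choose r)))"
proof -
  let ?K = "real (\<Sum>i\<in>{1..n}. d i) - 6 * real Dm ^ 2"
  let ?G = "graphs_with_degrees n d"
  let ?B = "{E \<in> ?G. m \<le> card (nbr E v \<inter> T)}"
  let ?F = "{A. A \<subseteq> T \<and> card A = r}"
  have finT: "finite T" using T finite_subset by blast
  have finG: "finite ?G" using finite_Yset[of n d v "{}"] by (simp add: Yset_def)
  have mr: "0 < m choose r" using r by (simp add: zero_less_binomial)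
  have "real (card ?B) * real (m choose r) = (\<Sum>E\<in>?B. real (m choose r))" by simp
  also have "\<dots> \<le> (\<Sum>E\<in>?B. real (card (nbr E v \<inter> T) choose r))"
    by (rule sum_mono) (simp add: binomial_right_mono)
  also have "\<dots> \<le> (\<Sum>E\<in>?G. real (card (nbr E v \<inter> T) choose r))"
    by (rule sum_mono2[OF finG]) auto
  also have "\<dots> = real (\<Sum>E\<in>?G. card (nbr E v \<inter> T) choose r)" by simp
  also have "\<dots> = real (\<Sum>A\<in>?F. card (Yset n d v A))" using sum_Yset[OF finT] by simp
  also have "\<dots> = (\<Sum>A\<in>?F. real (card (Yset n d v A)))" by simp
  also have "\<dots> \<le> (\<Sum>A\<in>?F. real (card ?G) * (\<Prod>a\<in>A. real (d v) * real (d a) / ?K))"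
  proof (rule sum_mono)
    fix A assume A: "A \<in> ?F"
    hence "finite A" "A \<subseteq> {1..n} - {v}" using T finT finite_subset by auto
    thus "real (card (Yset n d v A)) \<le> real (card ?G) * (\<Prod>a\<in>A. real (d v) * real (d a) / ?K)"
      by (rule Y_bound[OF _ _ Dm v K])
  qed
  also have "\<dots> = real (card ?G) * (\<Sum>A\<in>?F. \<Prod>a\<in>A. real (d v) * real (d a) / ?K)"
    by (simp add: sum_distrib_left)
  also have "\<dots> \<le> real (card ?G) * ((\<Sum>a\<in>T. real (d v) * real (d a) / ?K)^r / fact r)"
    by (rule mult_left_mono[OF esym_bound[OF finT]]) (use K in auto)
  also have "(\<Sum>a\<in>T. real (d v) * real (d a) / ?K) = real (d v) * real (\<Sum>a\<in>T. d a) / ?K"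
    by (simp add: sum_distrib_left sum_divide_distrib)
  finally have "real (card ?B) * real (m choose r) \<le> real (card ?G) * ((real (d v) * real (\<Sum>a\<in>T. d a) / ?K)^r / fact r)" .
  hence "real (card ?B) \<le> real (card ?G) * ((real (d v) * real (\<Sum>a\<in>T. d a) / ?K)^r / fact r) / real (m choose r)"
    using mr by (subst pos_le_divide_eq) auto
  thus ?thesis by (simp only: times_divide_eq_right divide_divide_eq_left)
qed

lemma induced_deg_eq:
  assumes E: "E \<in> simple_graphs_on n" and v: "v \<in> S"
  shows "induced_deg E S v = card (nbr E v \<inter> (S - {v}))"
proof -
  have "bij_betw (\<lambda>y. {v,y}) (nbr E v \<inter> (S - {v})) {e\<in>E. v \<in> e \<and> e \<subseteq> S}"
  proof (rule bij_betwI')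
    fix y z assume "y \<in> nbr E v \<inter> (S - {v})" "z \<in> nbr E v \<inter> (S - {v})"
    show "({v,y} = {v,z}) = (y = z)" by (auto simp: doubleton_eq_iff)
  next
    fix y assume "y \<in> nbr E v \<inter> (S - {v})" thus "{v,y} \<in> {e\<in>E. v \<in> e \<and> e \<subseteq> S}"
      using v by (simp add: nbr_def)
  next
    fix e assume e: "e \<in> {e\<in>E. v \<in> e \<and> e \<subseteq> S}"
    hence eE: "e \<in> E" by simp
    have "card e = 2" by (rule simple_graphs_onD(2)[OF E eE])
    moreover have "v \<in> e" using e by simp
    ultimately obtain y where y: "e = {v,y}" "y \<noteq> v" by (rule two_set_obtain)
    have "y \<in> nbr E v \<inter> (S - {v})" using e y by (simp add: nbr_def)
    thus "\<exists>y\<in>nbr E v \<inter> (S - {v}). e = {v,y}" using y by blast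
  qed
  thus ?thesis unfolding induced_deg_def by (rule bij_betw_same_card[symmetric])
qed

lemma first_k:
  assumes "finite S" "1 \<le> k" "k \<le> card S"
  shows "elem_k S k \<in> S" "\<exists>F. F \<subseteq> S \<and> card F = k \<and> (\<forall>i\<in>F. i \<le> elem_k S k)"
proof -
  let ?xs = "sorted_list_of_set S"
  have len: "length ?xs = card S" by simp
  have st: "sorted ?xs" "distinct ?xs" by simp_all
  have setx: "set ?xs = S" using assms(1) by simp
  have km: "k - 1 < length ?xs" using assms len by linarith
  show "elem_k S k \<in> S" unfolding elem_k_def using nth_mem[OF km] setx by simp
  let ?F = "set (take k ?xs)"
  have "?F \<subseteq> S" using set_take_subset[of k ?xs] setx by simp
  moreover have "card ?F = k" using st assms len by (simp add: distinct_card)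
  moreover have "\<forall>i\<in>?F. i \<le> elem_k S k"
  proof
    fix i assume "i \<in> ?F"
    then obtain j where j: "j < length (take k ?xs)" "take k ?xs ! j = i" by (meson in_set_conv_nth)
    have jk: "j < k" "j \<le> k - 1" using j by auto
    have "i = ?xs ! j" using j by simp
    also have "\<dots> \<le> ?xs ! (k - 1)" by (rule sorted_nth_mono[OF st(1) jk(2)]) (use assms len in linarith)
    finally show "i \<le> elem_k S k" by (simp add: elem_k_def)
  qed
  ultimately show "\<exists>F. F \<subseteq> S \<and> card F = k \<and> (\<forall>i\<in>F. i \<le> elem_k S k)" by blast
qed

lemma Ncnt_mono:
  assumes "finite S"
  shows "Ncnt g d S j \<le> Ncnt g d S (Suc j)"
proof -
  have "(\<Sum>i\<in>S. measure_pmf.prob (binomial_pmf (d i) g) {..j}) \<le> (\<Sum>i\<in>S. measure_pmf.prob (binomial_pmf (d i) g) {..Suc j})"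
    by (rule sum_mono) (rule measure_pmf.finite_measure_mono; simp)
  thus ?thesis unfolding Ncnt_def by (intro floor_mono) simp
qed

lemma Ncnt_nonneg: "0 \<le> Ncnt g d S j"
proof -
  have "0 \<le> (\<Sum>i\<in>S. measure_pmf.prob (binomial_pmf (d i) g) {..j})" by (rule sum_nonneg) simp
  thus ?thesis unfolding Ncnt_def by simp
qed

lemma prefix_len:
  assumes "finite S"
  shows "(\<Sum>j<Suc x. nH g d S j) = nat (Ncnt g d S x)"
proof (induction x)
  case 0 then show ?case by (simp add: nH_def)
next
  case (Suc x)
  have "(\<Sum>j<Suc (Suc x). nH g d S j) = nat (Ncnt g d S x) + nH g d S (Suc x)" using Suc by simp
  also have "\<dots> = nat (Ncnt g d S (Suc x))"
    using Ncnt_mono[OF assms, of g d x] Ncnt_nonneg[of g d S x] by (simp add: nH_def)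
  finally show ?case .
qed

lemma dH_le:
  assumes "finite S" "x \<le> D" "1 \<le> k" "int k \<le> Ncnt g d S x"
  shows "dH g d S D k \<le> x"
proof -
  let ?f = "\<lambda>j. replicate (nH g d S j) j"
  have split: "[0..<D+1] = [0..<x+1] @ [x+1..<D+1]"
    using upt_add_eq_append[of 0 "x+1" "D-x"] assms(2) by simp
  let ?L1 = "concat (map ?f [0..<x+1])"
  let ?L2 = "concat (map ?f [x+1..<D+1])"
  have eq: "dH_list g d S D = ?L1 @ ?L2" unfolding dH_list_def split by simp
  have "length ?L1 = (\<Sum>j\<leftarrow>[0..<x+1]. nH g d S j)" by (simp add: length_concat comp_def)
  also have "\<dots> = (\<Sum>j<Suc x. nH g d S j)" by (simp flip: sum_set_upt_conv_sum_list_nat add: atLeast0LessThan)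
  also have "\<dots> = nat (Ncnt g d S x)" by (rule prefix_len[OF assms(1)])
  finally have len: "length ?L1 = nat (Ncnt g d S x)" .
  have kl: "k - 1 < length ?L1" using len assms(3,4) by linarith
  have "dH g d S D k = ?L1 ! (k - 1)" unfolding dH_def eq by (rule nth_append_left[OF kl])
  also have "\<dots> \<in> set ?L1" using kl by (rule nth_mem)
  finally have "dH g d S D k \<in> set ?L1" .
  thus ?thesis by auto
qed

lemma exp_neg_quarter: "3/4 \<le> exp (-1/4::real)"
  using exp_ge_add_one_self[of "-1/4::real"] by simp

lemma tail_ratio:
  fixes \<Lambda> L \<theta> :: real and Mr :: real
  assumes L: "L = \<theta> * ln Mr" and th: "48 \<le> \<theta>" and M: "3 \<le> Mr"
    and lam: "0 \<le> \<Lambda>" "\<Lambda> \<le> 9/8 * L"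
  shows "\<Lambda> ^ nat \<lfloor>L/2\<rfloor> / (fact (nat \<lfloor>L/2\<rfloor>) * real (Suc (nat \<lfloor>2*L\<rfloor>) choose nat \<lfloor>L/2\<rfloor>)) \<le> 2 / Mr^6"
proof -
  let ?r = "nat \<lfloor>L/2\<rfloor>" and ?m = "Suc (nat \<lfloor>2*L\<rfloor>)"
  have lnM: "1 \<le> ln Mr" using M exp_le by (subst ln_ge_iff) auto
  have Lpos: "0 < L" using L th lnM by (simp add: mult_pos_pos)
  have m: "2 * L < real ?m" using Lpos by linarith
  have r: "real ?r \<le> L/2" using Lpos by linarith
  have r2: "L/2 - 1 \<le> real ?r" using Lpos by linarith
  have "\<Lambda> ^ ?r / (fact ?r * real (?m choose ?r)) \<le> (3/4)^?r"
    by (rule ratio_bound[OF lam m r Lpos])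
  also have "\<dots> \<le> exp (-1/4) ^ ?r" by (rule power_mono[OF exp_neg_quarter]) simp
  also have "\<dots> = exp (real ?r * (-1/4))" by (rule exp_of_nat_mult[symmetric])
  also have "\<dots> \<le> exp ((L/2 - 1) * (-1/4))" using r2 by simp
  also have "\<dots> = exp (1/4) * exp (- (L/8))" by (simp add: exp_add[symmetric] algebra_simps)
  also have "\<dots> \<le> 2 * exp (- (6 * ln Mr))"
  proof (rule mult_mono)
    have "exp (1/4::real) * exp (-1/4) = 1" by (simp add: exp_add[symmetric])
    hence "exp (1/4::real) * (3/4) \<le> 1" using exp_neg_quarter
      by (metis mult_left_mono exp_ge_zero order_trans order_refl)
    thus "exp (1/4::real) \<le> 2" by linarith
    have "6 * ln Mr \<le> L/8" using L th lnM by (simp add: mult_right_mono)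
    thus "exp (- (L/8)) \<le> exp (- (6 * ln Mr))" by simp
  qed auto
  also have "exp (- (6 * ln Mr)) = 1 / Mr^6"
  proof -
    have "ln (Mr^6) = 6 * ln Mr" using ln_realpow[of Mr 6] by simp
    hence "exp (6 * ln Mr) = exp (ln (Mr^6))" by simp
    also have "\<dots> = Mr^6" using M by simp
    finally have "exp (6 * ln Mr) = Mr^6" .
    thus ?thesis by (simp add: exp_minus field_simps)
  qed
  finally show ?thesis by simp
qed

lemma per_n:
  fixes d :: "nat \<Rightarrow> nat" and S :: "nat set" and n :: nat and \<delta> \<theta> Tp :: real
  assumes pos: "\<And>i. i \<in> {1..n} \<Longrightarrow> 1 \<le> d i"
    and mono: "\<And>i j. 1 \<le> i \<Longrightarrow> i \<le> j \<Longrightarrow> j \<le> n \<Longrightarrow> d i \<le> d j"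
    and Ssub: "S \<subseteq> {1..n}" and Sne: "S \<noteq> {}"
    and M3: "3 \<le> real (\<Sum>i\<in>{1..n}. d i)"
    and th: "48 \<le> \<theta>"
    and Tp: "Tp = \<theta> * ln (real (\<Sum>i\<in>{1..n}. d i)) * real (\<Sum>i\<in>{1..n}. d i) / real (\<Sum>i\<in>S. d i)"
    and Dl: "real (d n)^2 \<le> \<delta> * real (\<Sum>i\<in>{1..n}. d i)" and dl: "\<delta> \<le> 1/54"
  shows "\<forall>k\<in>{1..card S}. real (d (elem_k S k)) \<le> Tp \<longrightarrow>
           real (dH (real (\<Sum>i\<in>S. d i) / real (\<Sum>i\<in>{1..n}. d i)) d S (d n) k)
             \<le> 2 * (real (\<Sum>i\<in>S. d i) / real (\<Sum>i\<in>{1..n}. d i)) * Tp"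
  and "graphs_with_degrees n d \<noteq> {} \<Longrightarrow>
         measure_pmf.prob (pmf_of_set (graphs_with_degrees n d))
           {E. \<exists>k\<in>{1..card S}. real (d (elem_k S k)) \<le> Tp \<and>
               \<not> (real (induced_deg E S (elem_k S k)) \<le> 2 * (real (\<Sum>i\<in>S. d i) / real (\<Sum>i\<in>{1..n}. d i)) * Tp)}
         \<le> 2 / real (\<Sum>i\<in>{1..n}. d i)^5"
proof -
  define M where "M = (\<Sum>i\<in>{1..n}. d i)"
  define dS where "dS = (\<Sum>i\<in>S. d i)"
  define g where "g = real dS / real M"
  define L where "L = \<theta> * ln (real M)"
  define r where "r = nat \<lfloor>L/2\<rfloor>"
  define x where "x = nat \<lfloor>2*L\<rfloor>"
  have finS: "finite S" using Ssub finite_subset by blast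
  have M3': "3 \<le> real M" using M3 by (simp add: M_def)
  have Mpos: "0 < real M" using M3' by linarith
  have lnM: "1 \<le> ln (real M)" using M3' exp_le by (subst ln_ge_iff) auto
  have Lpos: "0 < L" using th lnM by (simp add: L_def)
  have dSpos: "0 < dS"
  proof -
    obtain i where i: "i \<in> S" using Sne by blast
    have "1 \<le> d i" using pos i Ssub by blast
    also have "d i \<le> dS" unfolding dS_def by (rule member_le_sum[OF i _ finS]) simp
    finally show ?thesis by simp
  qed
  have dSM: "dS \<le> M" unfolding dS_def M_def by (rule sum_mono2[OF _ Ssub]) auto
  have nM: "card S \<le> M"
  proof -
    have "card S = (\<Sum>i\<in>S. 1)" by simp
    also have "\<dots> \<le> dS" unfolding dS_def by (rule sum_mono) (use pos Ssub in auto)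
    finally show ?thesis using dSM by simp
  qed
  have g01: "0 < g" "g \<le> 1" using dSpos dSM Mpos by (auto simp: g_def)
  have Tp': "Tp = \<theta> * ln (real M) * real M / real dS" by (simp add: Tp M_def dS_def)
  have dSr: "0 < real dS" using dSpos by simp
  have gTp: "g * Tp = L" unfolding Tp' g_def L_def using dSr Mpos by (simp add: field_simps)
  have n1: "1 \<le> n" using Sne Ssub by fastforce
  have Dm: "\<And>i. i \<in> {1..n} \<Longrightarrow> d i \<le> d n" using mono n1 by auto
  have mr: "r \<le> Suc x" unfolding r_def x_def using Lpos by linarith
  have x2L: "real x \<le> 2 * L" unfolding x_def using Lpos by linarith
  have tr: "\<Lambda> ^ r / (fact r * real (Suc x choose r)) \<le> 2 / real M^6" if "0 \<le> \<Lambda>" "\<Lambda> \<le> 9/8 * L" for \<Lambda>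
    unfolding r_def x_def by (rule tail_ratio[OF L_def th M3' that])
  have M6: "real (card S) * (2 / real M^6) \<le> 2 / real M^5"
  proof -
    have "real (card S) * (2 / real M^6) \<le> real M * (2 / real M^6)"
      using nM by (intro mult_right_mono) auto
    also have "\<dots> = 2 / real M^5"
    proof -
      have "real M^6 = real M * real M^5" by (simp add: power_Suc[symmetric])
      thus ?thesis using Mpos by simp
    qed
    finally show ?thesis .
  qed
  have M5: "2 / real M^5 \<le> 1/2"
  proof -
    have "(3::real)^5 \<le> real M^5" using M3' by (intro power_mono) auto
    thus ?thesis using Mpos by (simp add: field_simps)
  qed
  show "\<forall>k\<in>{1..card S}. real (d (elem_k S k)) \<le> Tp \<longrightarrow>
           real (dH (real (\<Sum>i\<in>S. d i) / real (\<Sum>i\<in>{1..n}. d i)) d S (d n) k)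
             \<le> 2 * (real (\<Sum>i\<in>S. d i) / real (\<Sum>i\<in>{1..n}. d i)) * Tp"
  proof (intro ballI impI)
    fix k assume k: "k \<in> {1..card S}" and dk: "real (d (elem_k S k)) \<le> Tp"
    have k1: "1 \<le> k" "k \<le> card S" using k by auto
    obtain F where F: "F \<subseteq> S" "card F = k" "\<forall>i\<in>F. i \<le> elem_k S k"
      using first_k(2)[OF finS k1] by blast
    have ikS: "elem_k S k \<in> S" using first_k(1)[OF finS k1] .
    define x0 where "x0 = min x (d n)"
    have probF: "1 - 2 / real M^6 \<le> measure_pmf.prob (binomial_pmf (d i) g) {..x0}" if i: "i \<in> F" for i
    proof -
      have iS: "i \<in> S" using i F by blast
      have di: "d i \<le> d (elem_k S k)" using mono[of i "elem_k S k"] iS ikS Ssub F(3) i by force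
      have din: "d i \<le> d n" using Dm iS Ssub by blast
      show ?thesis
      proof (cases "x \<le> d n")
        case True
        hence x0x: "x0 = x" by (simp add: x0_def)
        have "1 - measure_pmf.prob (binomial_pmf (d i) g) {..x} \<le> real (d i choose r) * g^r / real (Suc x choose r)"
          by (rule binomial_tail) (use g01 mr in auto)
        also have "\<dots> \<le> (real (d i) * g)^r / (fact r * real (Suc x choose r))"
        proof -
          have "real (d i choose r) * fact r \<le> real (d i)^r"
          proof -
            have "(d i choose r) * fact r \<le> d i ^ r" by (rule binomial_fact_pow)
            hence "real ((d i choose r) * fact r) \<le> real (d i ^ r)" by (simp only: of_nat_le_iff)
            thus ?thesis by simp
          qed
          hence "real (d i choose r) * g^r * fact r \<le> (real (d i) * g)^r"
            using g01 by (simp add: power_mult_distrib mult_ac mult_right_mono)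
          moreover have "0 < real (Suc x choose r)" using mr by (simp add: zero_less_binomial)
          ultimately show ?thesis by (simp add: field_simps)
        qed
        also have "\<dots> \<le> 2 / real M^6"
        proof (rule tr)
          show "0 \<le> real (d i) * g" using g01 by simp
          have "real (d i) * g \<le> Tp * g" using di dk g01 by (intro mult_right_mono) auto
          thus "real (d i) * g \<le> 9/8 * L" using gTp Lpos by (simp add: mult.commute)
        qed
        finally show ?thesis using x0x by simp
      next
        case False
        hence x0x: "x0 = d n" by (simp add: x0_def)
        have "1 - measure_pmf.prob (binomial_pmf (d i) g) {..d n} \<le> real (d i choose Suc (d i)) * g^Suc (d i) / real (Suc (d n) choose Suc (d i))"
          by (rule binomial_tail) (use g01 din in auto)
        also have "\<dots> = 0" by simp
        finally have "1 \<le> measure_pmf.prob (binomial_pmf (d i) g) {..x0}" using x0x by simp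
        moreover have "0 \<le> 2 / real M^6" by simp
        ultimately show ?thesis by linarith
      qed
    qed
    have "real k - 1/2 \<le> real k * (1 - 2 / real M^6)"
    proof -
      have "real k * (2 / real M^6) \<le> real (card S) * (2 / real M^6)"
        using k1 by (intro mult_right_mono) auto
      hence "real k * (2 / real M^6) \<le> 1/2" using M6 M5 by linarith
      thus ?thesis by (simp add: algebra_simps)
    qed
    also have "\<dots> = (\<Sum>i\<in>F. 1 - 2 / real M^6)" using F(2) by simp
    also have "\<dots> \<le> (\<Sum>i\<in>F. measure_pmf.prob (binomial_pmf (d i) g) {..x0})" by (rule sum_mono) (rule probF)
    also have "\<dots> \<le> (\<Sum>i\<in>S. measure_pmf.prob (binomial_pmf (d i) g) {..x0})"
      by (rule sum_mono2[OF finS F(1)]) simp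
    finally have "real k \<le> (\<Sum>i\<in>S. measure_pmf.prob (binomial_pmf (d i) g) {..x0}) + 1/2" by simp
    hence Nk: "int k \<le> Ncnt g d S x0" unfolding Ncnt_def by (simp add: le_floor_iff)
    have "dH g d S (d n) k \<le> x0" by (rule dH_le[OF finS _ k1(1) Nk]) (simp add: x0_def)
    hence "real (dH g d S (d n) k) \<le> 2 * L" using x2L by (simp add: x0_def)
    also have "2 * L = 2 * g * Tp" using gTp by simp
    finally show "real (dH (real (\<Sum>i\<in>S. d i) / real (\<Sum>i\<in>{1..n}. d i)) d S (d n) k)
             \<le> 2 * (real (\<Sum>i\<in>S. d i) / real (\<Sum>i\<in>{1..n}. d i)) * Tp"
      by (simp add: g_def dS_def M_def)
  qed
  show "graphs_with_degrees n d \<noteq> {} \<Longrightarrow>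
         measure_pmf.prob (pmf_of_set (graphs_with_degrees n d))
           {E. \<exists>k\<in>{1..card S}. real (d (elem_k S k)) \<le> Tp \<and>
               \<not> (real (induced_deg E S (elem_k S k)) \<le> 2 * (real (\<Sum>i\<in>S. d i) / real (\<Sum>i\<in>{1..n}. d i)) * Tp)}
         \<le> 2 / real (\<Sum>i\<in>{1..n}. d i)^5"
  proof -
    assume Gne: "graphs_with_degrees n d \<noteq> {}"
    let ?G = "graphs_with_degrees n d"
    let ?Ev = "{E. \<exists>k\<in>{1..card S}. real (d (elem_k S k)) \<le> Tp \<and>
               \<not> (real (induced_deg E S (elem_k S k)) \<le> 2 * (real (\<Sum>i\<in>S. d i) / real (\<Sum>i\<in>{1..n}. d i)) * Tp)}"
    define Ks where "Ks = {k \<in> {1..card S}. real (d (elem_k S k)) \<le> Tp}"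
    define B where "B = (\<lambda>k. {E \<in> ?G. Suc x \<le> card (nbr E (elem_k S k) \<inter> (S - {elem_k S k}))})"
    have finG: "finite ?G" using finite_Yset[of n d 0 "{}"] by (simp add: Yset_def)
    have finKs: "finite Ks" by (simp add: Ks_def)
    have cKs: "card Ks \<le> card S" unfolding Ks_def by (rule order_trans[OF card_mono[of "{1..card S}"]]) auto
    have two: "2 * (real (\<Sum>i\<in>S. d i) / real (\<Sum>i\<in>{1..n}. d i)) * Tp = 2 * L"
      using gTp by (simp add: g_def dS_def M_def mult.assoc)
    have sub: "?G \<inter> ?Ev \<subseteq> (\<Union>k\<in>Ks. B k)"
    proof
      fix E assume E: "E \<in> ?G \<inter> ?Ev"
      then obtain k where k: "k \<in> {1..card S}" "real (d (elem_k S k)) \<le> Tp"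
        and nk: "\<not> (real (induced_deg E S (elem_k S k)) \<le> 2 * L)" using two by auto
      have k1: "1 \<le> k" "k \<le> card S" using k by auto
      have vS: "elem_k S k \<in> S" by (rule first_k(1)[OF finS k1])
      have ES: "E \<in> simple_graphs_on n" using E by (simp add: graphs_with_degrees_def)
      have "real x < real (card (nbr E (elem_k S k) \<inter> (S - {elem_k S k})))"
        using nk x2L induced_deg_eq[OF ES vS] by simp
      hence "Suc x \<le> card (nbr E (elem_k S k) \<inter> (S - {elem_k S k}))" by simp
      hence "E \<in> B k" using E by (simp add: B_def)
      moreover have "k \<in> Ks" using k by (simp add: Ks_def)
      ultimately show "E \<in> (\<Union>k\<in>Ks. B k)" by blast
    qed
    have K89: "8/9 * real M \<le> real M - 6 * real (d n)^2"
    proof -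
      have "6 * real (d n)^2 \<le> 6 * (\<delta> * real M)" using Dl by (simp add: M_def)
      also have "\<dots> \<le> 6 * (1/54 * real M)" using dl Mpos by (intro mult_left_mono mult_right_mono) auto
      finally show ?thesis by simp
    qed
    have Kpos: "0 < real (\<Sum>i\<in>{1..n}. d i) - 6 * real (d n)^2" using K89 Mpos by (simp add: M_def)
    have cB: "real (card (B k)) \<le> real (card ?G) * (2 / real M^6)" if k: "k \<in> Ks" for k
    proof -
      let ?v = "elem_k S k"
      have k1: "1 \<le> k" "k \<le> card S" using k by (auto simp: Ks_def)
      have vS: "?v \<in> S" by (rule first_k(1)[OF finS k1])
      have dv: "real (d ?v) \<le> Tp" using k by (simp add: Ks_def)
      have vn: "?v \<in> {1..n}" using vS Ssub by blast
      have T: "S - {?v} \<subseteq> {1..n} - {?v}" using Ssub by blast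
      let ?K = "real (\<Sum>i\<in>{1..n}. d i) - 6 * real (d n) ^ 2"
      let ?\<Lambda> = "real (d ?v) * real (\<Sum>a\<in>S - {?v}. d a) / ?K"
      have "real (card (B k)) \<le> real (card ?G) * (?\<Lambda>^r / (fact r * real (Suc x choose r)))"
        unfolding B_def by (rule graph_tail[OF T Dm vn Kpos mr])
      also have "\<dots> \<le> real (card ?G) * (2 / real M^6)"
      proof (rule mult_left_mono[OF tr])
        show "0 \<le> ?\<Lambda>" by (intro divide_nonneg_pos mult_nonneg_nonneg of_nat_0_le_iff Kpos)
        have dT: "(\<Sum>a\<in>S - {?v}. d a) \<le> dS" unfolding dS_def by (rule sum_mono2[OF finS]) auto
        have "real (d ?v) * real (\<Sum>a\<in>S - {?v}. d a) \<le> Tp * real dS"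
        proof (rule mult_mono[OF dv])
          show "real (\<Sum>a\<in>S - {?v}. d a) \<le> real dS" using dT by (simp only: of_nat_le_iff)
          show "0 \<le> Tp" using dv of_nat_0_le_iff order_trans by blast
        qed (rule of_nat_0_le_iff)
        also have "\<dots> = L * real M" unfolding Tp' L_def using dSr by simp
        finally have num: "real (d ?v) * real (\<Sum>a\<in>S - {?v}. d a) \<le> L * real M" .
        have KM: "?K = real M - 6 * real (d n)^2" by (simp add: M_def)
        have "?\<Lambda> \<le> L * real M / ?K" using num Kpos by (intro divide_right_mono) auto
        also have "\<dots> \<le> L * real M / (8/9 * real M)"
          using K89 KM Lpos Mpos by (intro divide_left_mono) auto
        also have "\<dots> = 9/8 * L" using Mpos by simp
        finally show "?\<Lambda> \<le> 9/8 * L" .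
      qed simp
      finally show ?thesis .
    qed
    have finU: "finite (\<Union>k\<in>Ks. B k)" by (rule finite_subset[OF _ finG]) (auto simp: B_def)
    have "card (?G \<inter> ?Ev) \<le> card (\<Union>k\<in>Ks. B k)" by (rule card_mono[OF finU sub])
    hence "real (card (?G \<inter> ?Ev)) \<le> real (card (\<Union>k\<in>Ks. B k))" by (simp only: of_nat_le_iff)
    also have "\<dots> \<le> real (\<Sum>k\<in>Ks. card (B k))" by (simp only: of_nat_le_iff) (rule card_UN_le[OF finKs])
    also have "\<dots> = (\<Sum>k\<in>Ks. real (card (B k)))" by simp
    also have "\<dots> \<le> (\<Sum>k\<in>Ks. real (card ?G) * (2 / real M^6))" by (rule sum_mono) (rule cB)
    also have "\<dots> = real (card Ks) * (real (card ?G) * (2 / real M^6))" by simp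
    also have "\<dots> \<le> real (card S) * (real (card ?G) * (2 / real M^6))"
      using cKs by (intro mult_right_mono) auto
    also have "\<dots> = real (card ?G) * (real (card S) * (2 / real M^6))" by simp
    also have "\<dots> \<le> real (card ?G) * (2 / real M^5)" using M6 by (intro mult_left_mono) auto
    finally have cnt: "real (card (?G \<inter> ?Ev)) \<le> real (card ?G) * (2 / real M^5)" .
    have cG: "0 < real (card ?G)" using Gne finG by (simp add: card_gt_0_iff)
    have "measure_pmf.prob (pmf_of_set ?G) ?Ev = real (card (?G \<inter> ?Ev)) / real (card ?G)"
      by (rule measure_pmf_of_set[OF Gne finG])
    also have "\<dots> \<le> 2 / real M^5" using cnt cG by (simp add: divide_le_eq mult.commute)
    finally show ?thesis by (simp add: M_def)
  qed
qed

lemma main_n: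
  fixes d :: "nat \<Rightarrow> nat" and S :: "nat set" and n :: nat and \<delta> :: real
  assumes pos: "\<And>i. i \<in> {1..n} \<Longrightarrow> 1 \<le> d i"
    and mono: "\<And>i j. 1 \<le> i \<Longrightarrow> i \<le> j \<Longrightarrow> j \<le> n \<Longrightarrow> d i \<le> d j"
    and Ssub: "S \<subseteq> {1..n}" and dpos: "0 < \<delta>" and dsmall: "\<delta> < (1/48)^32" and n3: "3 \<le> n"
    and ineq: "real (d n)^2 * ((1 / (real (\<Sum>i\<in>S. d i) / real (\<Sum>i\<in>{1..n}. d i))) * ln (real (\<Sum>i\<in>{1..n}. d i)))^12
               \<le> \<delta> * real (\<Sum>i\<in>S. d i)"
  defines "Cn \<equiv> \<delta> powr (-1/16) * (real (\<Sum>i\<in>{1..n}. d i) / real (\<Sum>i\<in>S. d i)) * ln (real (\<Sum>i\<in>{1..n}. d i))"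
    and "gn \<equiv> real (\<Sum>i\<in>S. d i) / real (\<Sum>i\<in>{1..n}. d i)"
  shows "\<forall>k\<in>{1..card S}. real (d (elem_k S k)) \<le> \<delta> powr (1/32) * Cn \<longrightarrow>
            real (dH gn d S (d n) k) \<le> 2 * gn * \<delta> powr (1/32) * Cn"
    and "graphs_with_degrees n d \<noteq> {} \<Longrightarrow>
         measure_pmf.prob (pmf_of_set (graphs_with_degrees n d))
           {E. \<exists>k\<in>{1..card S}. real (d (elem_k S k)) \<le> \<delta> powr (1/32) * Cn \<and>
               \<not> (real (induced_deg E S (elem_k S k)) \<le> 2 * gn * \<delta> powr (1/32) * Cn)}
         \<le> 2 / real (\<Sum>i\<in>{1..n}. d i)^5"
proof -
  define M where "M = (\<Sum>i\<in>{1..n}. d i)"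
  define dS where "dS = (\<Sum>i\<in>S. d i)"
  have finS: "finite S" using Ssub finite_subset by blast
  have nM: "n \<le> M"
  proof -
    have "n = (\<Sum>i\<in>{1..n}. 1::nat)" by simp
    also have "\<dots> \<le> M" unfolding M_def by (rule sum_mono) (use pos in auto)
    finally show ?thesis .
  qed
  have M3: "3 \<le> real M" using nM n3 by simp
  have Mpos: "0 < real M" using M3 by linarith
  have lnM: "1 \<le> ln (real M)" using M3 exp_le by (subst ln_ge_iff) auto
  have dSM: "dS \<le> M" unfolding dS_def M_def by (rule sum_mono2[OF _ Ssub]) auto
  have p1: "\<delta> powr (1/32) \<le> 1/48"
  proof -
    have "\<delta> \<le> (1/48) powr 32" using dsmall by (simp add: powr_realpow)
    hence "\<delta> powr (1/32) \<le> ((1/48) powr 32) powr (1/32)" using dpos by (intro powr_mono2) auto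
    also have "\<dots> = (1/48) powr (32 * (1/32))" by (rule powr_powr)
    also have "\<dots> = 1/48" by simp
    finally show ?thesis .
  qed
  define \<theta> where "\<theta> = \<delta> powr (-1/32)"
  have th: "48 \<le> \<theta>"
  proof -
    have pp: "0 < \<delta> powr (1/32)" using dpos by simp
    have "\<theta> = inverse (\<delta> powr (1/32))" unfolding \<theta>_def using powr_minus[of \<delta> "1/32"] by simp
    also have "\<dots> \<ge> inverse (1/48)" using p1 pp by (intro le_imp_inverse_le) auto
    finally show ?thesis by simp
  qed
  have prod: "\<delta> powr (1/32) * \<delta> powr (-1/16) = \<theta>"
    unfolding \<theta>_def by (simp add: powr_add[symmetric])
  have common: "\<delta> powr (1/32) * Cn = \<theta> * ln (real M) * real M / real dS \<and> real (d n)^2 \<le> \<delta> * real M"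
    if Sne: "S \<noteq> {}"
  proof -
    have dSpos: "0 < dS"
    proof -
      obtain i where i: "i \<in> S" using Sne by blast
      have "1 \<le> d i" using pos i Ssub by blast
      also have "d i \<le> dS" unfolding dS_def by (rule member_le_sum[OF i _ finS]) simp
      finally show ?thesis by simp
    qed
    have Tp: "\<delta> powr (1/32) * Cn = \<theta> * ln (real M) * real M / real dS"
      unfolding Cn_def M_def[symmetric] dS_def[symmetric] using prod[symmetric] by (simp add: mult_ac)
    have Dl: "real (d n)^2 \<le> \<delta> * real M"
    proof -
      have g1: "1 \<le> (1 / (real dS / real M)) * ln (real M)"
      proof -
        have "1 \<le> 1 / (real dS / real M)" using dSpos dSM Mpos by simp
        hence "1 * 1 \<le> (1 / (real dS / real M)) * ln (real M)" using lnM by (intro mult_mono) auto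
        thus ?thesis by simp
      qed
      have "real (d n)^2 = real (d n)^2 * 1" by simp
      also have "\<dots> \<le> real (d n)^2 * ((1 / (real dS / real M)) * ln (real M))^12"
        using g1 by (intro mult_left_mono one_le_power) auto
      also have "\<dots> \<le> \<delta> * real dS" using ineq by (simp add: M_def dS_def)
      also have "\<dots> \<le> \<delta> * real M" using dSM dpos by simp
      finally show ?thesis .
    qed
    show ?thesis using Tp Dl by blast
  qed
  have "(1/48::real)^32 \<le> 1/54" by (simp add: power_one_over)
  hence dl: "\<delta> \<le> 1/54" using dsmall by linarith
  show "\<forall>k\<in>{1..card S}. real (d (elem_k S k)) \<le> \<delta> powr (1/32) * Cn \<longrightarrow>
            real (dH gn d S (d n) k) \<le> 2 * gn * \<delta> powr (1/32) * Cn"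
  proof (cases "S = {}")
    case True then show ?thesis by simp
  next
    case Sne: False
    have Tp: "\<delta> powr (1/32) * Cn = \<theta> * ln (real M) * real M / real dS" and Dl: "real (d n)^2 \<le> \<delta> * real M"
      using common[OF Sne] by auto
    have R: "\<forall>k\<in>{1..card S}. real (d (elem_k S k)) \<le> \<delta> powr (1/32) * Cn \<longrightarrow>
           real (dH (real (\<Sum>i\<in>S. d i) / real (\<Sum>i\<in>{1..n}. d i)) d S (d n) k)
             \<le> 2 * (real (\<Sum>i\<in>S. d i) / real (\<Sum>i\<in>{1..n}. d i)) * (\<delta> powr (1/32) * Cn)"
      by (rule per_n(1)[OF pos mono Ssub Sne _ th _ _ dl]) (use M3 Tp Dl in \<open>simp_all add: M_def dS_def\<close>)
    thus ?thesis unfolding gn_def by (simp add: mult.assoc)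
  qed
  show "graphs_with_degrees n d \<noteq> {} \<Longrightarrow>
         measure_pmf.prob (pmf_of_set (graphs_with_degrees n d))
           {E. \<exists>k\<in>{1..card S}. real (d (elem_k S k)) \<le> \<delta> powr (1/32) * Cn \<and>
               \<not> (real (induced_deg E S (elem_k S k)) \<le> 2 * gn * \<delta> powr (1/32) * Cn)}
         \<le> 2 / real (\<Sum>i\<in>{1..n}. d i)^5"
  proof (cases "S = {}")
    case True then show ?thesis by (simp add: sum_nonneg)
  next
    case Sne: False
    have Tp: "\<delta> powr (1/32) * Cn = \<theta> * ln (real M) * real M / real dS" and Dl: "real (d n)^2 \<le> \<delta> * real M"
      using common[OF Sne] by auto
    assume Gne: "graphs_with_degrees n d \<noteq> {}"
    have R: "measure_pmf.prob (pmf_of_set (graphs_with_degrees n d))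
           {E. \<exists>k\<in>{1..card S}. real (d (elem_k S k)) \<le> \<delta> powr (1/32) * Cn \<and>
               \<not> (real (induced_deg E S (elem_k S k)) \<le> 2 * (real (\<Sum>i\<in>S. d i) / real (\<Sum>i\<in>{1..n}. d i)) * (\<delta> powr (1/32) * Cn))}
         \<le> 2 / real (\<Sum>i\<in>{1..n}. d i)^5"
      by (rule per_n(2)[OF pos mono Ssub Sne _ th _ _ dl Gne]) (use M3 Tp Dl in \<open>simp_all add: M_def dS_def\<close>)
    thus ?thesis unfolding gn_def by (simp add: mult.assoc)
  qed
qed

theorem lemma3p7:
  fixes d :: "nat \<Rightarrow> nat \<Rightarrow> nat"
    and S :: "nat \<Rightarrow> nat set"
    and \<delta> :: "nat \<Rightarrow> real"
    and c :: real
  defines "M \<equiv> (\<lambda>n. real (\<Sum>i\<in>{1..n}. d n i))"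
    and "\<Delta> \<equiv> (\<lambda>n. d n n)"
    and "\<gamma> \<equiv> (\<lambda>n. real (\<Sum>i\<in>S n. d n i) / real (\<Sum>i\<in>{1..n}. d n i))"
    and "C \<equiv> (\<lambda>n. \<delta> n powr (-1/16)
            * (real (\<Sum>i\<in>{1..n}. d n i) / real (\<Sum>i\<in>S n. d n i))
            * ln (real (\<Sum>i\<in>{1..n}. d n i)))"
  assumes pos: "\<And>n i. i \<in> {1..n} \<Longrightarrow> 1 \<le> d n i"
    and mono: "\<And>n i j. 1 \<le> i \<Longrightarrow> i \<le> j \<Longrightarrow> j \<le> n \<Longrightarrow> d n i \<le> d n j"
    and even: "\<And>n. even (\<Sum>i\<in>{1..n}. d n i)"
    and Ssub: "\<And>n. S n \<subseteq> {1..n}"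
    and graphical: "\<forall>\<^sub>F n in at_top. graphs_with_degrees n (d n) \<noteq> {}"
    and delta_pos: "\<forall>\<^sub>F n in at_top. \<delta> n > 0"
    and delta_lim: "\<delta> \<longlonglongrightarrow> 0"
    and delta_inv: "(\<lambda>n. 1 / \<delta> n) \<in> O(\<lambda>n. ln (ln (M n)))"
    and main_ineq: "\<forall>\<^sub>F n in at_top.
        real (\<Delta> n) ^ 2 * ((1 / \<gamma> n) * ln (M n)) ^ 12 \<le> \<delta> n * real (\<Sum>i\<in>S n. d n i)"
    and c_pos: "c > 0"
    and gamma_bound: "\<forall>\<^sub>F n in at_top. \<gamma> n < 1 - c"
  shows "(\<forall>\<^sub>F n in at_top. \<forall>k\<in>{1..card (S n)}.
            real (d n (elem_k (S n) k)) \<le> \<delta> n powr (1/32) * C n \<longrightarrow>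
            real (dH (\<gamma> n) (d n) (S n) (\<Delta> n) k) \<le> 2 * \<gamma> n * \<delta> n powr (1/32) * C n)
       \<and> (\<lambda>n. measure_pmf.prob (pmf_of_set (graphs_with_degrees n (d n)))
               {E. \<exists>k\<in>{1..card (S n)}.
                    real (d n (elem_k (S n) k)) \<le> \<delta> n powr (1/32) * C n \<and>
                    \<not> (real (induced_deg E (S n) (elem_k (S n) k))
                         \<le> 2 * \<gamma> n * \<delta> n powr (1/32) * C n)})
         \<in> o(\<lambda>n. 1 / M n ^ 2)"
proof -
  have Mn: "real n \<le> M n" for n
  proof -
    have "n = (\<Sum>i\<in>{1..n}. 1::nat)" by simp
    also have "\<dots> \<le> (\<Sum>i\<in>{1..n}. d n i)" by (rule sum_mono) (use pos in auto)
    finally have "n \<le> (\<Sum>i\<in>{1..n}. d n i)" .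
    hence "real n \<le> real (\<Sum>i\<in>{1..n}. d n i)" by (simp only: of_nat_le_iff)
    thus ?thesis by (simp only: M_def)
  qed
  have ineq': "\<forall>\<^sub>F n in at_top.
        real (d n n)^2 * ((1 / (real (\<Sum>i\<in>S n. d n i) / real (\<Sum>i\<in>{1..n}. d n i))) * ln (real (\<Sum>i\<in>{1..n}. d n i)))^12
          \<le> \<delta> n * real (\<Sum>i\<in>S n. d n i)"
    using main_ineq by (simp add: M_def \<Delta>_def \<gamma>_def)
  have small: "\<forall>\<^sub>F n in at_top. \<delta> n < (1/48)^32"
    by (rule order_tendstoD(2)[OF delta_lim]) simp
  have ev: "\<forall>\<^sub>F n in at_top. 0 < \<delta> n \<and> \<delta> n < (1/48)^32 \<and> 3 \<le> n \<and>
        real (d n n)^2 * ((1 / (real (\<Sum>i\<in>S n. d n i) / real (\<Sum>i\<in>{1..n}. d n i))) * ln (real (\<Sum>i\<in>{1..n}. d n i)))^12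
          \<le> \<delta> n * real (\<Sum>i\<in>S n. d n i) \<and> graphs_with_degrees n (d n) \<noteq> {}"
    using delta_pos small eventually_ge_at_top[of 3] ineq' graphical by eventually_elim blast
  have each: "(\<forall>k\<in>{1..card (S n)}.
            real (d n (elem_k (S n) k)) \<le> \<delta> n powr (1/32) * C n \<longrightarrow>
            real (dH (\<gamma> n) (d n) (S n) (\<Delta> n) k) \<le> 2 * \<gamma> n * \<delta> n powr (1/32) * C n)
        \<and> measure_pmf.prob (pmf_of_set (graphs_with_degrees n (d n)))
               {E. \<exists>k\<in>{1..card (S n)}.
                    real (d n (elem_k (S n) k)) \<le> \<delta> n powr (1/32) * C n \<and>
                    \<not> (real (induced_deg E (S n) (elem_k (S n) k))
                         \<le> 2 * \<gamma> n * \<delta> n powr (1/32) * C n)} \<le> 2 / M n ^ 5"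
    if h: "0 < \<delta> n \<and> \<delta> n < (1/48)^32 \<and> 3 \<le> n \<and>
        real (d n n)^2 * ((1 / (real (\<Sum>i\<in>S n. d n i) / real (\<Sum>i\<in>{1..n}. d n i))) * ln (real (\<Sum>i\<in>{1..n}. d n i)))^12
          \<le> \<delta> n * real (\<Sum>i\<in>S n. d n i) \<and> graphs_with_degrees n (d n) \<noteq> {}" for n
  proof -
    have p: "\<And>i. i \<in> {1..n} \<Longrightarrow> 1 \<le> d n i" using pos by blast
    have m: "\<And>i j. 1 \<le> i \<Longrightarrow> i \<le> j \<Longrightarrow> j \<le> n \<Longrightarrow> d n i \<le> d n j" using mono by blast
    note r = main_n[of n "d n" "S n" "\<delta> n", OF p m Ssub]
    show ?thesis using r h unfolding C_def \<gamma>_def \<Delta>_def M_def by auto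
  qed
  show ?thesis
  proof
    show "\<forall>\<^sub>F n in at_top. \<forall>k\<in>{1..card (S n)}.
            real (d n (elem_k (S n) k)) \<le> \<delta> n powr (1/32) * C n \<longrightarrow>
            real (dH (\<gamma> n) (d n) (S n) (\<Delta> n) k) \<le> 2 * \<gamma> n * \<delta> n powr (1/32) * C n"
      using ev by eventually_elim (use each in blast)
  next
    show "(\<lambda>n. measure_pmf.prob (pmf_of_set (graphs_with_degrees n (d n)))
               {E. \<exists>k\<in>{1..card (S n)}.
                    real (d n (elem_k (S n) k)) \<le> \<delta> n powr (1/32) * C n \<and>
                    \<not> (real (induced_deg E (S n) (elem_k (S n) k))
                         \<le> 2 * \<gamma> n * \<delta> n powr (1/32) * C n)})
         \<in> o(\<lambda>n. 1 / M n ^ 2)"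
    proof (rule landau_o.smallI)
      fix c :: real assume c: "0 < c"
      show "\<forall>\<^sub>F n in at_top. norm (measure_pmf.prob (pmf_of_set (graphs_with_degrees n (d n)))
               {E. \<exists>k\<in>{1..card (S n)}.
                    real (d n (elem_k (S n) k)) \<le> \<delta> n powr (1/32) * C n \<and>
                    \<not> (real (induced_deg E (S n) (elem_k (S n) k))
                         \<le> 2 * \<gamma> n * \<delta> n powr (1/32) * C n)}) \<le> c * norm (1 / M n ^ 2)"
        using ev eventually_ge_at_top[of "nat \<lceil>2/c\<rceil>"]
      proof eventually_elim
        case (elim n)
        let ?P = "measure_pmf.prob (pmf_of_set (graphs_with_degrees n (d n)))
               {E. \<exists>k\<in>{1..card (S n)}.
                    real (d n (elem_k (S n) k)) \<le> \<delta> n powr (1/32) * C n \<and>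
                    \<not> (real (induced_deg E (S n) (elem_k (S n) k))
                         \<le> 2 * \<gamma> n * \<delta> n powr (1/32) * C n)}"
        have P: "?P \<le> 2 / M n ^ 5" using each elim(1) by blast
        have M3: "3 \<le> M n" using Mn[of n] elim(1) by linarith
        have Mc: "2 / c \<le> M n" using Mn[of n] elim(2) by linarith
        have "2 \<le> c * M n" using Mc c by (simp add: field_simps)
        also have "\<dots> \<le> c * M n ^ 3"
        proof -
          have "M n * 1 \<le> M n * M n^2" using M3 by (intro mult_left_mono) (auto simp: one_le_power)
          thus ?thesis using c by (simp add: power2_eq_square power3_eq_cube)
        qed
        finally have "2 \<le> c * M n ^ 3" .
        hence "2 / M n ^ 5 \<le> c * M n ^ 3 / M n ^ 5" using M3 by (intro divide_right_mono) auto
        also have "c * M n ^ 3 / M n ^ 5 = c * (1 / M n ^ 2)" using M3 by (simp add: power_add[symmetric] field_simps)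
        finally have "?P \<le> c * (1 / M n ^ 2)" using P by linarith
        moreover have "0 \<le> ?P" by simp
        ultimately show ?case using M3 by simp
      qed
    qed
  qed
qed

end
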